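(* Let $p\geq 1$, let $\boldsymbol \Omega$ be a $p \times p$ positive definite matrix and let $0 < c < 1/2$. Let $\boldsymbol \beta$ have the structured normal-gamma (SNG) prior with parameters $c, \boldsymbol \Omega$, with marginal density $$p(\boldsymbol b \mid c, \boldsymbol \Omega) = \int_{(0,\infty)^p} \Big(\prod_{i=1}^p \frac{1}{s_i}\, g_c(s_i)\Big)\, \phi_{\boldsymbol \Omega}(\boldsymbol b / \boldsymbol s)\, d\boldsymbol s \in [0,+\infty],$$ where $\phi_{\boldsymbol \Omega}$ is the $\text{normal}(\boldsymbol 0, \boldsymbol \Omega)$ density, $\boldsymbol b/\boldsymbol s$ is elementwise division, and $g_c$ is the density of $s_i = \sqrt{s_i^2}$ when $s_i^2 \sim \text{gamma}(\text{shape } c, \text{rate } c)$, i.e. $g_c(s) \propto s^{2c-1} e^{-c s^2}$ on $(0,\infty)$. If $\boldsymbol b \in \mathbb{R}^p$ satisfies $b_j = 0$ for some $j \in \{1, \dots, p\}$, then $p(\boldsymbol b \mid c, \boldsymbol \Omega) = +\infty$.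
   Context: The SNG prior is the distribution of $\boldsymbol \beta = \boldsymbol s \circ \boldsymbol z$ (elementwise product), where $\boldsymbol z \sim \text{normal}(\boldsymbol 0, \boldsymbol \Omega)$ is independent of $\boldsymbol s$, and $s_1^2,\dots,s_p^2$ are i.i.d. gamma with shape $c$ and rate $c$ (so $\mathbb{E}[s_j^2]=1$), $s_j>0$. The displayed integral is the marginal (joint) prior density of $\boldsymbol \beta$ at $\boldsymbol b$, allowed to equal $+\infty$. *)

theory Defs
  imports "HOL-Analysis.Analysis"
begin

definition pos_def_matrix :: "real^'n^'n \<Rightarrow> bool" where
  "pos_def_matrix A \<longleftrightarrow> transpose A = A \<and> (\<forall>x. x \<noteq> 0 \<longrightarrow> x \<bullet> (A *v x) > 0)"

definition normal_density :: "real^'n^'n \<Rightarrow> real^'n \<Rightarrow> real" where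
  "normal_density Om x =
     (2 * pi) powr (- real CARD('n) / 2) * det Om powr (- 1 / 2)
     * exp (- (x \<bullet> (matrix_inv Om *v x)) / 2)"

text \<open>Density of s = sqrt(t) when t ~ gamma(shape c, rate c), on (0,infinity):
  g_c(s) = 2 c^c / Gamma(c) * s^(2c-1) * exp(-c s^2).\<close>
definition sqrt_gamma_density :: "real \<Rightarrow> real \<Rightarrow> real" where
  "sqrt_gamma_density c s =
     (if s > 0 then 2 * c powr c / Gamma c * s powr (2 * c - 1) * exp (- c * s\<^sup>2) else 0)"

definition sng_density :: "real \<Rightarrow> real^'n^'n \<Rightarrow> real^'n \<Rightarrow> ennreal" where
  "sng_density c Om b =
     (\<integral>\<^sup>+ s. indicator {s. \<forall>i. 0 < s $ i} s *
        ennreal ((\<Prod>i\<in>UNIV. sqrt_gamma_density c (s $ i) / s $ i)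
                 * normal_density Om (\<chi> i. b $ i / s $ i)) \<partial>lborel)"

end

theory Submission imports Defs begin

lemma det_pos:
  fixes Om :: "real^'n^'n" assumes pd: "pos_def_matrix Om" shows "det Om > 0"
proof -
  define M where "M t = (1-t) *\<^sub>R mat 1 + t *\<^sub>R Om" for t :: real
  have mv: "M t *v x = (1-t) *\<^sub>R x + t *\<^sub>R (Om *v x)" for t x
    by (simp add: M_def matrix_vector_mult_add_rdistrib scaleR_matrix_vector_assoc[symmetric])
  have nz: "det (M t) \<noteq> 0" if "0 \<le> t" "t \<le> 1" for t
  proof -
    have "inj ((*v) (M t))"
    proof (rule injI)
      fix x y assume "M t *v x = M t *v y"
      then have 0: "M t *v (x - y) = 0" by (simp add: matrix_vector_mult_diff_distrib)
      show "x = y"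
      proof (rule ccontr)
        assume "x \<noteq> y"
        then have "x - y \<noteq> 0" by simp
        then have a: "(x-y) \<bullet> (Om *v (x-y)) > 0" "(x-y) \<bullet> (x-y) > 0"
          using pd unfolding pos_def_matrix_def by auto
        have "(x-y) \<bullet> (M t *v (x-y)) = (1-t) * ((x-y) \<bullet> (x-y)) + t * ((x-y) \<bullet> (Om *v (x-y)))"
          by (simp add: mv inner_add_right)
        also have "\<dots> > 0"
        proof (cases "t = 0")
          case True then show ?thesis using a by simp
        next
          case False then have "t > 0" using that by simp
          then show ?thesis using a that by (smt (verit) mult_nonneg_nonneg mult_pos_pos)
        qed
        finally show False using 0 by simp
      qed
    qed
    then show ?thesis
      using det_nz_iff_inj[of "(*v) (M t)"] by (simp add: matrix_vector_mul_linear)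
  qed
  have comp: "M t $ i $ k = (1-t) * mat 1 $ i $ k + t * Om $ i $ k" for t i k
    by (simp add: M_def)
  have cont: "continuous_on {0..1} (\<lambda>t. det (M t))"
    unfolding det_def comp by (intro continuous_intros)
  have M0: "M 0 = mat 1" and M1: "M 1 = Om" by (simp_all add: M_def)
  show ?thesis
  proof (rule ccontr)
    assume "\<not> det Om > 0"
    then have "det (M 1) \<le> 0" using M1 by simp
    moreover have "0 \<le> det (M 0)" using M0 by simp
    ultimately obtain t where "0 \<le> t" "t \<le> 1" "det (M t) = 0"
      using IVT2'[of "\<lambda>t. det (M t)" 1 0 0] cont by auto
    then show False using nz by blast
  qed
qed

lemma quad_bound:
  fixes A :: "real^'n^'n" and x b :: "real^'n"
  assumes "\<And>i. \<bar>x$i\<bar> \<le> \<bar>b$i\<bar>"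
  shows "x \<bullet> (A *v x) \<le> (\<Sum>i\<in>UNIV. \<Sum>k\<in>UNIV. \<bar>b$i\<bar> * \<bar>A$i$k\<bar> * \<bar>b$k\<bar>)"
proof -
  have "x \<bullet> (A *v x) = (\<Sum>i\<in>UNIV. \<Sum>k\<in>UNIV. x$i * A$i$k * x$k)"
    by (simp add: inner_vec_def matrix_vector_mult_def sum_distrib_left mult.assoc)
  also have "\<dots> \<le> (\<Sum>i\<in>UNIV. \<Sum>k\<in>UNIV. \<bar>b$i\<bar> * \<bar>A$i$k\<bar> * \<bar>b$k\<bar>)"
  proof (intro sum_mono)
    fix i k
    have "x$i * A$i$k * x$k \<le> \<bar>x$i\<bar> * \<bar>A$i$k\<bar> * \<bar>x$k\<bar>"
      by (metis abs_ge_self abs_mult)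
    also have "\<dots> \<le> \<bar>b$i\<bar> * \<bar>A$i$k\<bar> * \<bar>b$k\<bar>"
      using assms by (intro mult_mono) auto
    finally show "x$i * A$i$k * x$k \<le> \<bar>b$i\<bar> * \<bar>A$i$k\<bar> * \<bar>b$k\<bar>" .
  qed
  finally show ?thesis .
qed

lemma box_measure:
  fixes lo hi :: "real^'n"
  assumes "\<And>i. lo$i \<le> hi$i"
  shows "emeasure lborel (box lo hi) = ennreal (\<Prod>i\<in>UNIV. hi$i - lo$i)"
proof -
  have "lo \<in> cbox lo hi" using assms by (simp add: mem_box_cart)
  then have ne: "cbox lo hi \<noteq> {}" by auto
  have "emeasure lborel (box lo hi) = emeasure lborel (cbox lo hi)"
    by (simp add: emeasure_lborel_box_eq emeasure_lborel_cbox_eq)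
  also have "\<dots> = ennreal (measure lborel (cbox lo hi))"
    using ne box_ne_empty(1)[of lo hi] by (simp add: emeasure_lborel_cbox_eq content_cbox_if inner_diff_left)
  also have "measure lborel (cbox lo hi) = (\<Prod>i\<in>UNIV. hi$i - lo$i)"
    using ne by (intro content_cbox_cart)
  finally show ?thesis .
qed

lemma ennreal_unbounded:
  fixes X :: ennreal and P :: real
  assumes "P > 0" and "\<And>y. y \<ge> 1 \<Longrightarrow> ennreal (P * y) \<le> X"
  shows "X = \<infinity>"
proof (rule ccontr)
  assume "X \<noteq> \<infinity>"
  then obtain r where r: "X = ennreal r" "r \<ge> 0" by (cases X) auto
  define y where "y = max 1 ((r + 1) / P)"
  have "ennreal (P * y) \<le> ennreal r" using assms(2)[of y] r y_def by simp
  then have "P * y \<le> r" using r by (simp add: ennreal_le_iff)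
  moreover have "P * y \<ge> r + 1" using assms(1) unfolding y_def
    by (smt (verit, ccfv_SIG) divide_pos_pos max.cobounded2 mult.commute pos_divide_le_eq)
  ultimately show False by simp
qed

theorem proposition2p2:
  fixes Om :: "real^'n^'n" and c :: real and b :: "real^'n"
  assumes "pos_def_matrix Om"
    and "0 < c" and "c < 1 / 2"
    and "\<exists>j. b $ j = 0"
  shows "sng_density c Om b = \<infinity>"
proof -
  obtain j where bj: "b $ j = 0" using assms(4) by blast
  have c0: "0 < c" and c1: "c < 1/2" using assms by auto
  define K where "K = 2 * c powr c / Gamma c"
  have K0: "K > 0" using c0 by (simp add: K_def)
  define A where "A = K * 2 powr (2*c-2) * exp (-4*c)"
  have A0: "A > 0" using K0 by (simp add: A_def)
  define D where "D = (2 * pi) powr (- real CARD('n) / 2) * det Om powr (- 1 / 2)"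
  have D0: "D > 0" using det_pos[OF assms(1)] by (simp add: D_def)
  define M where "M = (\<Sum>i\<in>UNIV. \<Sum>k\<in>UNIV. \<bar>b$i\<bar> * \<bar>matrix_inv Om$i$k\<bar> * \<bar>b$k\<bar>)"
  define l0 where "l0 i = (if i = j then K * exp (-c) else A)" for i
  define P where "P = (\<Prod>i\<in>UNIV. l0 i) * (D * exp (- M / 2))"
  have l00: "l0 i > 0" for i using K0 A0 by (simp add: l0_def)
  have P0: "P > 0" using l00 D0 by (simp add: P_def prod_pos)
  have gs: "sqrt_gamma_density c s / s = K * s powr (2*c-2) * exp (- c * s\<^sup>2)" if "s > 0" for s
  proof -
    have "s powr (2*c-1) / s = s powr (2*c-2)"
    proof -
      have "s powr (2*c-2) * s = s powr (2*c-1)"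
        using powr_add[of s "2*c-2" 1] that by simp
      then show ?thesis using that by (simp add: field_simps)
    qed
    then show ?thesis using that by (simp add: sqrt_gamma_density_def K_def field_simps power2_eq_square)
  qed
  show ?thesis
  proof (rule ennreal_unbounded[OF P0])
    fix y :: real assume y1: "y \<ge> 1"
    define e where "e = y powr (1 / (2*c-1))"
    have e0: "e > 0" using y1 by (simp add: e_def)
    have e1: "e \<le> 1" unfolding e_def using y1 c1 powr_mono2'[of "1 / (2*c-1)" 1 y]
      by simp
    have ey: "e powr (2*c-1) = y" using c1 y1 by (simp add: e_def powr_powr)
    define E where "E = e powr (2*c-2)"
    have E0: "E > 0" using e0 by (simp add: E_def)
    have Ee: "E * e = y"
      using powr_add[of e "2*c-2" 1] e0 ey by (simp add: E_def)
    define lo :: "real^'n" where "lo = (\<chi> i. if i = j then 0 else 1)"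
    define hi :: "real^'n" where "hi = (\<chi> i. if i = j then e else 2)"
    define F where "F s = indicator {s. \<forall>i. 0 < s $ i} s *
        ennreal ((\<Prod>i\<in>UNIV. sqrt_gamma_density c (s $ i) / s $ i)
                 * normal_density Om (\<chi> i. b $ i / s $ i))" for s :: "real^'n"
    have sng: "sng_density c Om b = (\<integral>\<^sup>+ s. F s \<partial>lborel)"
      by (simp add: sng_density_def F_def)
    have meas: "emeasure lborel (box lo hi) = ennreal e"
    proof -
      have "emeasure lborel (box lo hi) = ennreal (\<Prod>i\<in>UNIV. hi$i - lo$i)"
        using e0 by (intro box_measure) (simp add: lo_def hi_def)
      also have "(\<Prod>i\<in>UNIV. hi$i - lo$i) = (hi$j - lo$j) * (\<Prod>i\<in>UNIV-{j}. hi$i - lo$i)"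
        by (simp add: prod.remove)
      also have "(\<Prod>i\<in>UNIV-{j}. hi$i - lo$i) = 1"
        by (intro prod.neutral) (simp add: lo_def hi_def)
      finally show ?thesis by (simp add: lo_def hi_def)
    qed
    have pw: "ennreal (P * E) * indicator (box lo hi) s \<le> F s" for s
    proof (cases "s \<in> box lo hi")
      case False then show ?thesis by simp
    next
      case True
      then have sb: "\<And>i. lo$i < s$i \<and> s$i < hi$i" by (simp add: mem_box_cart)
      have sj: "0 < s$j" "s$j < e" using sb[of j] by (auto simp: lo_def hi_def)
      have si: "1 < s$i" "s$i < 2" if "i \<noteq> j" for i using sb[of i] that by (auto simp: lo_def hi_def)
      have spos: "\<forall>i. 0 < s$i"
      proof
        fix i show "0 < s$i" using sj si[of i] by (cases "i = j") auto
      qed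
      define l where "l i = (if i = j then K * exp (-c) * E else A)" for i
      have lf: "0 \<le> l i \<and> l i \<le> sqrt_gamma_density c (s $ i) / s $ i" for i
      proof (cases "i = j")
        case True
        have p: "E \<le> s$i powr (2*c-2)" unfolding E_def True
          using sj c1 by (intro powr_mono2') auto
        have "(s$i)\<^sup>2 \<le> 1\<^sup>2" using sj e1 True by (intro power_mono) auto
        then have q: "exp (-c) \<le> exp (- c * (s$i)\<^sup>2)" using c0 by simp
        have "E * exp (-c) \<le> s$i powr (2*c-2) * exp (- c * (s$i)\<^sup>2)"
          using E0 by (intro mult_mono[OF p q]) auto
        then have "K * (E * exp (-c)) \<le> K * (s$i powr (2*c-2) * exp (- c * (s$i)\<^sup>2))"
          using K0 by (intro mult_left_mono) auto
        then have "K * exp (-c) * E \<le> K * s$i powr (2*c-2) * exp (- c * (s$i)\<^sup>2)"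
          by (simp only: mult_ac)
        then show ?thesis using True gs spos K0 E0 by (simp add: l_def)
      next
        case False
        have p: "2 powr (2*c-2) \<le> s$i powr (2*c-2)"
          using si[OF False] c1 by (intro powr_mono2') auto
        have "(s$i)\<^sup>2 \<le> 2\<^sup>2" using si[OF False] by (intro power_mono) auto
        then have q: "exp (-4*c) \<le> exp (- c * (s$i)\<^sup>2)" using c0 by simp
        have "2 powr (2*c-2) * exp (-4*c) \<le> s$i powr (2*c-2) * exp (- c * (s$i)\<^sup>2)"
          by (intro mult_mono[OF p q]) auto
        then have "K * (2 powr (2*c-2) * exp (-4*c)) \<le> K * (s$i powr (2*c-2) * exp (- c * (s$i)\<^sup>2))"
          using K0 by (intro mult_left_mono) auto
        then have "A \<le> K * s$i powr (2*c-2) * exp (- c * (s$i)\<^sup>2)"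
          unfolding A_def by (simp only: mult_ac)
        then show ?thesis using False gs spos A0 by (simp add: l_def)
      qed
      have prl: "(\<Prod>i\<in>UNIV. l i) \<le> (\<Prod>i\<in>UNIV. sqrt_gamma_density c (s $ i) / s $ i)"
        using lf by (intro prod_mono) auto
      have prl2: "(\<Prod>i\<in>UNIV. l i) = E * (\<Prod>i\<in>UNIV. l0 i)"
      proof -
        have "(\<Prod>i\<in>UNIV. l i) = l j * (\<Prod>i\<in>UNIV-{j}. l i)" by (simp add: prod.remove)
        also have "(\<Prod>i\<in>UNIV-{j}. l i) = (\<Prod>i\<in>UNIV-{j}. l0 i)"
          by (intro prod.cong) (auto simp: l_def l0_def)
        also have "(\<Prod>i\<in>UNIV. l0 i) = l0 j * (\<Prod>i\<in>UNIV-{j}. l0 i)" by (simp add: prod.remove)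
        ultimately show ?thesis by (simp add: l_def l0_def)
      qed
      define x :: "real^'n" where "x = (\<chi> i. b $ i / s $ i)"
      have xb: "\<bar>x$i\<bar> \<le> \<bar>b$i\<bar>" for i
      proof (cases "i = j")
        case True then show ?thesis by (simp add: x_def bj)
      next
        case False
        then have "1 < s$i" using si by blast
        then have "\<bar>b$i\<bar> * 1 \<le> \<bar>b$i\<bar> * s$i" by (intro mult_left_mono) auto
        then show ?thesis using \<open>1 < s$i\<close>
          by (simp add: x_def abs_divide divide_le_eq)
      qed
      have "x \<bullet> (matrix_inv Om *v x) \<le> M"
        unfolding M_def by (rule quad_bound) (rule xb)
      then have "exp (- M / 2) \<le> exp (- (x \<bullet> (matrix_inv Om *v x)) / 2)" by simp
      then have "D * exp (- M / 2) \<le> D * exp (- (x \<bullet> (matrix_inv Om *v x)) / 2)"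
        using D0 by (intro mult_left_mono) auto
      then have nd: "D * exp (- M / 2) \<le> normal_density Om x"
        by (simp only: normal_density_def D_def)
      have "P * E \<le> (\<Prod>i\<in>UNIV. sqrt_gamma_density c (s $ i) / s $ i) * normal_density Om x"
      proof -
        have "P * E = (\<Prod>i\<in>UNIV. l i) * (D * exp (- M / 2))"
          by (simp add: P_def prl2)
        also have "\<dots> \<le> (\<Prod>i\<in>UNIV. sqrt_gamma_density c (s $ i) / s $ i) * normal_density Om x"
        proof (intro mult_mono prl nd)
          show "0 \<le> (\<Prod>i\<in>UNIV. sqrt_gamma_density c (s $ i) / s $ i)"
            using lf by (intro prod_nonneg) (meson order_trans)
          show "0 \<le> D * exp (- M / 2)" using D0 by simp
        qed
        finally show ?thesis .
      qed
      then show ?thesis using True spos by (simp add: F_def x_def ennreal_leI)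
    qed
    have "ennreal (P * y) = ennreal (P * E) * emeasure lborel (box lo hi)"
      using meas P0 E0 e0 Ee by (simp add: ennreal_mult[symmetric] mult.assoc)
    also have "\<dots> = (\<integral>\<^sup>+ s. ennreal (P * E) * indicator (box lo hi) s \<partial>lborel)"
      by (rule nn_integral_cmult_indicator[symmetric]) simp
    also have "\<dots> \<le> (\<integral>\<^sup>+ s. F s \<partial>lborel)"
      by (intro nn_integral_mono pw)
    finally show "ennreal (P * y) \<le> sng_density c Om b" using sng by simp
  qed
qed

end
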